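(* Let $\mathbb{F}$ be a field with $\mathrm{char}(\mathbb{F})\neq 2,3$, let $D\in\mathbb{N}$ and let $I$ be a minimal ideal of $\hat{\mathcal{H}}$ of axial codimension $D$. Then $\dim\hat{\mathcal{H}}/I\le D+\lfloor D/2\rfloor+2\lfloor D/6\rfloor$.
   Context: Notation: $\mathbb{N}=\{1,2,3,\dots\}$, $3\mathbb{N}=\{3,6,9,\dots\}$; for $r\in\mathbb{Z}$, $\bar r=r+3\mathbb{Z}\in\mathbb{Z}_3$. The algebra $\hat{\mathcal{H}}$ is the commutative $\mathbb{F}$-algebra with basis $\{a_i:i\in\mathbb{Z}\}\cup\{s_j:j\in\mathbb{N}\}\cup\{p_{\bar r,k}:\bar r\in\{\bar1,\bar2\},\ k\in 3\mathbb{N}\}$, where $s_0=0$, $p_{\bar r,j}=0$ for all $\bar r$ whenever $j\notin 3\mathbb{N}$, $p_{\bar 0,j}=-p_{\bar1,j}-p_{\bar2,j}$, $z_{\bar r,j}=p_{\bar r+\bar1,j}-p_{\bar r-\bar1,j}$, and for $i,i'\in\mathbb{Z}$, $j,l\in\mathbb{N}$, $h,k\in3\mathbb{N}$, $\bar r,\bar t\in\mathbb{Z}_3$: (H1) $a_ia_{i'}=\tfrac12(a_i+a_{i'})+s_{|i-i'|}+z_{\bar\imath,|i-i'|}$; (H2) $a_is_j=-\tfrac34a_i+\tfrac38(a_{i-j}+a_{i+j})+\tfrac32 s_j-z_{\bar\imath,j}$; (H3) $a_ip_{\bar r,k}=\tfrac32p_{\bar r,k}-p_{-(\bar\imath+\bar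 r),k}$; (H4) $s_js_l=\tfrac34(s_j+s_l)-\tfrac38(s_{|j-l|}+s_{j+l})$; (H5) $s_jp_{\bar r,k}=\tfrac34(p_{\bar r,j}+p_{\bar r,k})-\tfrac38(p_{\bar r,|j-k|}+p_{\bar r,j+k})$; (H6) $p_{\bar r,h}p_{\bar t,k}=\tfrac14(z_{-(\bar r+\bar t),h}+z_{-(\bar r+\bar t),k})-\tfrac18(z_{-(\bar r+\bar t),|h-k|}+z_{-(\bar r+\bar t),h+k})$. The axial codimension of an ideal $I$ is the dimension of the subspace of $\hat{\mathcal{H}}/I$ spanned by the images of the $a_i$. An ideal $I$ of axial codimension $D$ has pattern $(\alpha_0,\dots,\alpha_D)$ (where $\alpha_0\neq0\neq\alpha_D$) if $\sum_{i=0}^D\alpha_ia_i\in I$. A minimal ideal of axial codimension $D$ is an ideal of axial codimension $D$ which is minimal with respect to inclusion among the ideals of axial codimension $D$ having the same pattern. *)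

theory Defs
  imports Main
begin

text \<open>Basis indices, encoded so that every index is valid:
  \<open>HA i\<close> stands for \<open>a_i\<close> (\<open>i \<in> \<int>\<close>);
  \<open>HS n\<close> stands for \<open>s_(n+1)\<close> (so \<open>j = n+1 \<in> \<nat> = {1,2,...}\<close>);
  \<open>HP True m\<close> stands for \<open>p_(1bar, 3(m+1))\<close> and \<open>HP False m\<close> for \<open>p_(2bar, 3(m+1))\<close>.\<close>

datatype hidx = HA int | HS nat | HP bool nat

definition hsupp :: "(hidx \<Rightarrow> 'a::field) \<Rightarrow> hidx set" where
  "hsupp f = {u. f u \<noteq> 0}"

definition hcar :: "(hidx \<Rightarrow> 'a::field) set" where
  "hcar = {f. finite (hsupp f)}"

definition hbas :: "hidx \<Rightarrow> hidx \<Rightarrow> 'a::field" where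
  "hbas u = (\<lambda>v. if v = u then 1 else 0)"

definition hzero :: "hidx \<Rightarrow> 'a::field" where
  "hzero = (\<lambda>w. 0)"

definition ha :: "int \<Rightarrow> hidx \<Rightarrow> 'a::field" where
  "ha i = hbas (HA i)"

definition hs :: "nat \<Rightarrow> hidx \<Rightarrow> 'a::field" where
  "hs j = (if j = 0 then hzero else hbas (HS (j - 1)))"

definition hp :: "int \<Rightarrow> nat \<Rightarrow> hidx \<Rightarrow> 'a::field" where
  "hp r k = (if 0 < k \<and> 3 dvd k then
      (if r mod 3 = 1 then hbas (HP True (k div 3 - 1))
       else if r mod 3 = 2 then hbas (HP False (k div 3 - 1))
       else (\<lambda>w. - hbas (HP True (k div 3 - 1)) w - hbas (HP False (k div 3 - 1)) w))
    else hzero)"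

definition hz :: "int \<Rightarrow> nat \<Rightarrow> hidx \<Rightarrow> 'a::field" where
  "hz r j = (\<lambda>w. hp (r + 1) j w - hp (r - 1) j w)"

definition absdiff :: "nat \<Rightarrow> nat \<Rightarrow> nat" where
  "absdiff j l = (if l \<le> j then j - l else l - j)"

definition prep :: "bool \<Rightarrow> int" where
  "prep b = (if b then 1 else 2)"

text \<open>Products of basis elements, following (H1)--(H6) (and commutativity).\<close>
fun bmul :: "hidx \<Rightarrow> hidx \<Rightarrow> hidx \<Rightarrow> 'a::field" where
  "bmul (HA i) (HA i') = (\<lambda>w. 1/2 * (ha i w + ha i' w)
       + hs (nat \<bar>i - i'\<bar>) w + hz i (nat \<bar>i - i'\<bar>) w)"
| "bmul (HA i) (HS n) = (let j = n + 1 in (\<lambda>w. - (3/4) * ha i w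
       + 3/8 * (ha (i - int j) w + ha (i + int j) w) + 3/2 * hs j w - hz i j w))"
| "bmul (HS n) (HA i) = (let j = n + 1 in (\<lambda>w. - (3/4) * ha i w
       + 3/8 * (ha (i - int j) w + ha (i + int j) w) + 3/2 * hs j w - hz i j w))"
| "bmul (HA i) (HP b m) = (let r = prep b; k = 3 * (m + 1) in
       (\<lambda>w. 3/2 * hp r k w - hp (- (i + r)) k w))"
| "bmul (HP b m) (HA i) = (let r = prep b; k = 3 * (m + 1) in
       (\<lambda>w. 3/2 * hp r k w - hp (- (i + r)) k w))"
| "bmul (HS n) (HS n') = (let j = n + 1; l = n' + 1 in
       (\<lambda>w. 3/4 * (hs j w + hs l w) - 3/8 * (hs (absdiff j l) w + hs (j + l) w)))"
| "bmul (HS n) (HP b m) = (let j = n + 1; r = prep b; k = 3 * (m + 1) in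
       (\<lambda>w. 3/4 * (hp r j w + hp r k w) - 3/8 * (hp r (absdiff j k) w + hp r (j + k) w)))"
| "bmul (HP b m) (HS n) = (let j = n + 1; r = prep b; k = 3 * (m + 1) in
       (\<lambda>w. 3/4 * (hp r j w + hp r k w) - 3/8 * (hp r (absdiff j k) w + hp r (j + k) w)))"
| "bmul (HP b m) (HP b' m') = (let r = prep b; t = prep b'; h = 3 * (m + 1); k = 3 * (m' + 1) in
       (\<lambda>w. 1/4 * (hz (- (r + t)) h w + hz (- (r + t)) k w)
          - 1/8 * (hz (- (r + t)) (absdiff h k) w + hz (- (r + t)) (h + k) w)))"

definition hmul :: "(hidx \<Rightarrow> 'a::field) \<Rightarrow> (hidx \<Rightarrow> 'a) \<Rightarrow> hidx \<Rightarrow> 'a" where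
  "hmul x y = (\<lambda>w. \<Sum>u\<in>hsupp x. \<Sum>v\<in>hsupp y. x u * y v * bmul u v w)"

definition hideal :: "(hidx \<Rightarrow> 'a::field) set \<Rightarrow> bool" where
  "hideal I \<longleftrightarrow> I \<subseteq> hcar \<and> hzero \<in> I
     \<and> (\<forall>x\<in>I. \<forall>y\<in>I. (\<lambda>w. x w + y w) \<in> I)
     \<and> (\<forall>c. \<forall>x\<in>I. (\<lambda>w. c * x w) \<in> I)
     \<and> (\<forall>x\<in>hcar. \<forall>y\<in>I. hmul x y \<in> I)"

definition hspan :: "(hidx \<Rightarrow> 'a::field) set \<Rightarrow> (hidx \<Rightarrow> 'a) set" where
  "hspan S = {(\<lambda>w. \<Sum>v\<in>T. c v * v w) | T c. finite T \<and> T \<subseteq> S}"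

definition lcomb :: "(nat \<Rightarrow> 'a::field) \<Rightarrow> (hidx \<Rightarrow> 'a) list \<Rightarrow> hidx \<Rightarrow> 'a" where
  "lcomb c vs = (\<lambda>w. \<Sum>i<length vs. c i * (vs ! i) w)"

text \<open>\<open>qdim I S n\<close>: the subspace of \<open>H-hat/I\<close> spanned by the images of the elements of \<open>S\<close>
  has dimension \<open>n\<close>, i.e. it has a basis consisting of the images of \<open>n\<close> elements of
  \<open>span S\<close>.\<close>
definition qdim :: "(hidx \<Rightarrow> 'a::field) set \<Rightarrow> (hidx \<Rightarrow> 'a) set \<Rightarrow> nat \<Rightarrow> bool" where
  "qdim I S n \<longleftrightarrow> (\<exists>vs. length vs = n \<and> set vs \<subseteq> hspan S
     \<and> (\<forall>c. lcomb c vs \<in> I \<longrightarrow> (\<forall>i<n. c i = 0))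
     \<and> (\<forall>x\<in>S. \<exists>c. (\<lambda>w. x w - lcomb c vs w) \<in> I))"

definition axial_codim :: "(hidx \<Rightarrow> 'a::field) set \<Rightarrow> nat \<Rightarrow> bool" where
  "axial_codim I D \<longleftrightarrow> qdim I (range ha) D"

definition has_pattern :: "(hidx \<Rightarrow> 'a::field) set \<Rightarrow> nat \<Rightarrow> (nat \<Rightarrow> 'a) \<Rightarrow> bool" where
  "has_pattern I D \<alpha> \<longleftrightarrow> \<alpha> 0 \<noteq> 0 \<and> \<alpha> D \<noteq> 0
     \<and> (\<lambda>w. \<Sum>i\<le>D. \<alpha> i * ha (int i) w) \<in> I"

definition minimal_ideal :: "(hidx \<Rightarrow> 'a::field) set \<Rightarrow> nat \<Rightarrow> bool" where
  "minimal_ideal I D \<longleftrightarrow> hideal I \<and> axial_codim I D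
     \<and> (\<exists>\<alpha>. has_pattern I D \<alpha>
          \<and> (\<forall>J. hideal J \<and> axial_codim J D \<and> has_pattern J D \<alpha> \<and> J \<subseteq> I \<longrightarrow> J = I))"

end

theory Submission
  imports Defs
begin


lemma hsupp_hbas[simp]: "hsupp (hbas u :: hidx \<Rightarrow> 'a::field) = {u}"
  by (auto simp: hsupp_def hbas_def)

lemma hcar_iff: "x \<in> hcar \<longleftrightarrow> finite (hsupp x)"
  by (simp add: hcar_def)

lemma hcar_hbas[simp]: "(hbas u :: hidx \<Rightarrow> 'a::field) \<in> hcar"
  by (simp add: hcar_iff)

lemma hcar_zero[simp]: "(\<lambda>w. 0 :: 'a::field) \<in> hcar"
  by (simp add: hcar_iff hsupp_def)

lemma hcar_lin:
  fixes x y :: "hidx \<Rightarrow> 'a::field"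
  assumes "x \<in> hcar" "y \<in> hcar"
  shows "(\<lambda>w. a * x w + b * y w) \<in> hcar"
proof -
  have "hsupp (\<lambda>w. a * x w + b * y w) \<subseteq> hsupp x \<union> hsupp y"
    by (auto simp: hsupp_def)
  then show ?thesis using assms by (meson finite_Un finite_subset hcar_iff)
qed

lemma hcar_add: "x \<in> hcar \<Longrightarrow> y \<in> hcar \<Longrightarrow> (\<lambda>w. x w + y w) \<in> hcar"
  using hcar_lin[of x y 1 1] by simp
lemma hcar_sub: "x \<in> hcar \<Longrightarrow> y \<in> hcar \<Longrightarrow> (\<lambda>w. x w - y w) \<in> hcar"
  using hcar_lin[of x y 1 "-1"] by simp
lemma hcar_scale: "x \<in> hcar \<Longrightarrow> (\<lambda>w. a * x w) \<in> hcar"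
  using hcar_lin[of x x a 0] by simp

lemma hcar_sum:
  fixes f :: "'b \<Rightarrow> hidx \<Rightarrow> 'a::field"
  assumes "finite A" "\<forall>i\<in>A. f i \<in> hcar"
  shows "(\<lambda>w. \<Sum>i\<in>A. f i w) \<in> hcar"
proof -
  have "hsupp (\<lambda>w. \<Sum>i\<in>A. f i w) \<subseteq> (\<Union>i\<in>A. hsupp (f i))"
    by (auto simp: hsupp_def intro: ccontr)
  moreover have "finite (\<Union>i\<in>A. hsupp (f i))" using assms by (auto simp: hcar_iff)
  ultimately show ?thesis by (meson finite_subset hcar_iff)
qed

lemma hzero_eq: "hzero = (\<lambda>w. 0)" by (simp add: hzero_def)

lemma ha_hcar[simp]: "ha i \<in> hcar" by (simp add: ha_def)
lemma hs_hcar[simp]: "hs j \<in> hcar" by (simp add: hs_def hzero_eq)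
lemma hcar_negsub: "x \<in> hcar \<Longrightarrow> y \<in> hcar \<Longrightarrow> (\<lambda>w. - x w - y w) \<in> hcar"
  using hcar_lin[of x y "-1" "-1"] by simp
lemma hp_hcar[simp]: "hp r k \<in> hcar"
  by (simp add: hp_def hzero_eq hcar_negsub)
lemma hz_hcar[simp]: "hz r k \<in> hcar"
  by (simp add: hz_def hcar_sub)

definition suppIn :: "hidx set \<Rightarrow> (hidx \<Rightarrow> 'a::field) \<Rightarrow> bool" where
  "suppIn B x \<longleftrightarrow> (\<forall>w. w \<notin> B \<longrightarrow> x w = 0)"

lemma suppIn_hcar: "finite B \<Longrightarrow> suppIn B x \<Longrightarrow> x \<in> hcar"
  unfolding suppIn_def hcar_iff hsupp_def
  by (metis (mono_tags, lifting) finite_subset mem_Collect_eq subsetI)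

section \<open>Multiplication\<close>

lemma hmul_ext:
  fixes y :: "hidx \<Rightarrow> 'a::field"
  assumes "finite V" "hsupp y \<subseteq> V"
  shows "hmul (hbas p) y w = (\<Sum>v\<in>V. y v * bmul p v w)"
proof -
  have "hmul (hbas p) y w = (\<Sum>v\<in>hsupp y. y v * bmul p v w)"
    unfolding hmul_def by simp (simp add: hbas_def)
  also have "\<dots> = (\<Sum>v\<in>V. y v * bmul p v w)"
    using assms by (intro sum.mono_neutral_left) (auto simp: hsupp_def)
  finally show ?thesis .
qed

lemma hmul_ext':
  fixes y :: "hidx \<Rightarrow> 'a::field"
  assumes "y \<in> hcar"
  shows "hmul (hbas p) y w = (\<Sum>v\<in>hsupp y. y v * bmul p v w)"
  using assms by (intro hmul_ext) (auto simp: hcar_iff)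

lemma hmul_lin:
  fixes y z :: "hidx \<Rightarrow> 'a::field"
  assumes "y \<in> hcar" "z \<in> hcar"
  shows "hmul (hbas p) (\<lambda>w. a * y w + b * z w) = (\<lambda>w. a * hmul (hbas p) y w + b * hmul (hbas p) z w)"
proof
  fix w
  let ?V = "hsupp y \<union> hsupp z"
  have fin: "finite ?V" using assms by (auto simp: hcar_iff)
  have s: "hsupp (\<lambda>w. a * y w + b * z w) \<subseteq> ?V" by (auto simp: hsupp_def)
  have "hmul (hbas p) (\<lambda>w. a * y w + b * z w) w = (\<Sum>v\<in>?V. (a * y v + b * z v) * bmul p v w)"
    by (rule hmul_ext[OF fin s])
  also have "\<dots> = a * (\<Sum>v\<in>?V. y v * bmul p v w) + b * (\<Sum>v\<in>?V. z v * bmul p v w)"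
    by (simp add: sum.distrib sum_distrib_left algebra_simps)
  also have "\<dots> = a * hmul (hbas p) y w + b * hmul (hbas p) z w"
    using hmul_ext[OF fin, of y p w] hmul_ext[OF fin, of z p w] by simp
  finally show "hmul (hbas p) (\<lambda>w. a * y w + b * z w) w = a * hmul (hbas p) y w + b * hmul (hbas p) z w" .
qed

lemma hmul_add: "y \<in> hcar \<Longrightarrow> z \<in> hcar \<Longrightarrow> hmul (hbas p) (\<lambda>w. y w + z w) = (\<lambda>w. hmul (hbas p) y w + hmul (hbas p) z w)"
  using hmul_lin[of y z p 1 1] by simp

lemma hmul_scale: "y \<in> hcar \<Longrightarrow> hmul (hbas p) (\<lambda>w. a * y w) = (\<lambda>w. a * hmul (hbas p) y w)"
  using hmul_lin[of y y p a 0] by simp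

lemma hmul_bb: "hmul (hbas p) (hbas v) = (bmul p v :: hidx \<Rightarrow> 'a::field)"
  apply (rule ext)
  apply (subst hmul_ext[of "{v}"])
    apply simp_all
  apply (simp add: hbas_def)
  done

lemma hmul_sum:
  fixes f :: "'b \<Rightarrow> hidx \<Rightarrow> 'a::field"
  assumes "finite A" "\<forall>i\<in>A. f i \<in> hcar"
  shows "hmul (hbas p) (\<lambda>w. \<Sum>i\<in>A. f i w) = (\<lambda>w. \<Sum>i\<in>A. hmul (hbas p) (f i) w)"
  using assms
proof (induction A rule: finite_induct)
  case empty
  then show ?case by (simp add: hmul_def hsupp_def)
next
  case (insert x F)
  have "hmul (hbas p) (\<lambda>w. \<Sum>i\<in>insert x F. f i w) = hmul (hbas p) (\<lambda>w. f x w + (\<Sum>i\<in>F. f i w))"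
    using insert by simp
  also have "\<dots> = (\<lambda>w. hmul (hbas p) (f x) w + hmul (hbas p) (\<lambda>w. \<Sum>i\<in>F. f i w) w)"
    using insert by (intro hmul_add) (auto intro: hcar_sum)
  also have "\<dots> = (\<lambda>w. \<Sum>i\<in>insert x F. hmul (hbas p) (f i) w)"
    using insert by simp
  finally show ?case .
qed

section \<open>Ideals and spans modulo an ideal\<close>

definition spI :: "(hidx \<Rightarrow> 'a::field) set \<Rightarrow> (hidx \<Rightarrow> 'a) set \<Rightarrow> (hidx \<Rightarrow> 'a) set" where
  "spI I F = {x. \<exists>c. (\<lambda>w. x w - (\<Sum>v\<in>F. c v * v w)) \<in> I}"

context
  fixes I :: "(hidx \<Rightarrow> 'a::field) set"
  assumes hI: "hideal I"
begin

lemma id_hcar: "x \<in> I \<Longrightarrow> x \<in> hcar" using hI by (auto simp: hideal_def)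
lemma id_zero: "(\<lambda>w. 0) \<in> I" using hI by (auto simp: hideal_def hzero_def)
lemma id_add: "x \<in> I \<Longrightarrow> y \<in> I \<Longrightarrow> (\<lambda>w. x w + y w) \<in> I" using hI by (auto simp: hideal_def)
lemma id_scale: "x \<in> I \<Longrightarrow> (\<lambda>w. c * x w) \<in> I" using hI by (auto simp: hideal_def)
lemma id_mul: "x \<in> hcar \<Longrightarrow> y \<in> I \<Longrightarrow> hmul x y \<in> I" using hI by (auto simp: hideal_def)
lemma id_lin: "x \<in> I \<Longrightarrow> y \<in> I \<Longrightarrow> (\<lambda>w. a * x w + b * y w) \<in> I"
  using id_add[OF id_scale[of x a] id_scale[of y b]] by simp
lemma id_sub: "x \<in> I \<Longrightarrow> y \<in> I \<Longrightarrow> (\<lambda>w. x w - y w) \<in> I"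
  using id_lin[of x y 1 "-1"] by simp

context
  fixes F :: "(hidx \<Rightarrow> 'a) set"
  assumes finF: "finite F"
begin

lemma sp_of_I: "x \<in> I \<Longrightarrow> x \<in> spI I F"
  unfolding spI_def by (rule CollectI, rule exI[of _ "\<lambda>v. 0"]) simp

lemma sp_lin:
  assumes "x \<in> spI I F" "y \<in> spI I F"
  shows "(\<lambda>w. a * x w + b * y w) \<in> spI I F"
proof -
  obtain c where c: "(\<lambda>w. x w - (\<Sum>v\<in>F. c v * v w)) \<in> I" using assms(1) by (auto simp: spI_def)
  obtain d where d: "(\<lambda>w. y w - (\<Sum>v\<in>F. d v * v w)) \<in> I" using assms(2) by (auto simp: spI_def)
  have "(\<lambda>w. a * (x w - (\<Sum>v\<in>F. c v * v w)) + b * (y w - (\<Sum>v\<in>F. d v * v w))) \<in> I"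
    using id_lin[OF c d] by simp
  moreover have "(\<lambda>w. a * (x w - (\<Sum>v\<in>F. c v * v w)) + b * (y w - (\<Sum>v\<in>F. d v * v w)))
      = (\<lambda>w. (a * x w + b * y w) - (\<Sum>v\<in>F. (a * c v + b * d v) * v w))"
    by (simp add: algebra_simps sum.distrib sum_distrib_left)
  ultimately show ?thesis unfolding spI_def by auto
qed

lemma sp_add: "x \<in> spI I F \<Longrightarrow> y \<in> spI I F \<Longrightarrow> (\<lambda>w. x w + y w) \<in> spI I F"
  using sp_lin[of x y 1 1] by simp
lemma sp_sub: "x \<in> spI I F \<Longrightarrow> y \<in> spI I F \<Longrightarrow> (\<lambda>w. x w - y w) \<in> spI I F"
  using sp_lin[of x y 1 "-1"] by simp
lemma sp_scale: "x \<in> spI I F \<Longrightarrow> (\<lambda>w. a * x w) \<in> spI I F"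
  using sp_lin[of x x a 0] by simp
lemma sp_zero: "(\<lambda>w. 0) \<in> spI I F"
  using sp_of_I[OF id_zero] .

lemma sp_elem: "u \<in> F \<Longrightarrow> u \<in> spI I F"
proof -
  assume u: "u \<in> F"
  have "(\<lambda>w. u w - (\<Sum>v\<in>F. (if v = u then 1 else 0) * v w)) = (\<lambda>w. 0)"
    using u finF by (simp add: if_distrib[of "\<lambda>x. x * _"] cong: if_cong)
  then show ?thesis using id_zero unfolding spI_def by (auto intro!: exI[of _ "\<lambda>v. if v = u then 1 else 0"])
qed

lemma sp_sum:
  fixes f :: "'b \<Rightarrow> hidx \<Rightarrow> 'a"
  assumes "finite A" "\<forall>i\<in>A. f i \<in> spI I F"
  shows "(\<lambda>w. \<Sum>i\<in>A. f i w) \<in> spI I F"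
  using assms
proof (induction A rule: finite_induct)
  case empty then show ?case using sp_zero by simp
next
  case (insert x A)
  then show ?case using sp_add[of "f x" "\<lambda>w. \<Sum>i\<in>A. f i w"] by simp
qed

lemma sp_basis:
  assumes "x \<in> hcar" "\<And>v. x v \<noteq> 0 \<Longrightarrow> hbas v \<in> spI I F"
  shows "x \<in> spI I F"
proof -
  have "(\<lambda>w. \<Sum>v\<in>hsupp x. x v * hbas v w) \<in> spI I F"
    using assms by (intro sp_sum) (auto simp: hcar_iff hsupp_def intro: sp_scale)
  moreover have "(\<lambda>w. \<Sum>v\<in>hsupp x. x v * hbas v w) = x"
  proof
    fix w
    show "(\<Sum>v\<in>hsupp x. x v * hbas v w) = x w"
      using assms(1) by (simp add: hbas_def hcar_iff hsupp_def if_distrib[of "\<lambda>t. _ * t"] cong: if_cong)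
  qed
  ultimately show ?thesis by simp
qed

end
end



definition B1 :: "nat \<Rightarrow> hidx set" where
  "B1 m = {w. case w of HA j \<Rightarrow> \<bar>j - 1\<bar> < int m | HS n \<Rightarrow> n + 1 < m | HP c n \<Rightarrow> 3*(n+1) < m}"

lemma B1_simps[simp]:
  "HA j \<in> B1 m \<longleftrightarrow> \<bar>j - 1\<bar> < int m"
  "HS n \<in> B1 m \<longleftrightarrow> n + 1 < m"
  "HP c n \<in> B1 m \<longleftrightarrow> 3*(n+1) < m"
  by (auto simp: B1_def)

lemma B1_finite: "finite (B1 m)"
proof -
  have "B1 m \<subseteq> HA ` {1 - int m..1 + int m} \<union> HS ` {..<m} \<union> (\<lambda>(c,n). HP c n) ` (UNIV \<times> {..<m})"
  proof
    fix w assume "w \<in> B1 m"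
    then show "w \<in> HA ` {1 - int m..1 + int m} \<union> HS ` {..<m} \<union> (\<lambda>(c,n). HP c n) ` (UNIV \<times> {..<m})"
      by (cases w) (auto simp: image_iff)
  qed
  then show ?thesis by (rule finite_subset) auto
qed

lemma lev_vanish_hs: "l < m \<Longrightarrow> w \<notin> B1 m \<Longrightarrow> hs l w = 0"
  by (cases w) (auto simp: hs_def hbas_def hzero_def)

lemma lev_vanish_hp: "l < m \<Longrightarrow> w \<notin> B1 m \<Longrightarrow> hp r l w = 0"
  by (cases w) (auto simp: hp_def hbas_def hzero_def elim!: dvdE)

lemma lev_vanish_hz: "l < m \<Longrightarrow> w \<notin> B1 m \<Longrightarrow> hz r l w = 0"
  by (simp add: hz_def lev_vanish_hp)

lemma bmul_inv:
  assumes "1 \<le> m" "v \<in> B1 m" "w \<notin> B1 m"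
  shows "bmul (HA 1) v w = (0::'a::field)"
proof (cases v)
  case (HA j)
  have "nat \<bar>1 - j\<bar> < m" using assms HA by auto
  moreover have "ha 1 w = (0::'a)" "ha j w = (0::'a)" using assms HA
    by (auto simp: ha_def hbas_def)
  ultimately show ?thesis using HA assms
    by (simp add: lev_vanish_hs lev_vanish_hz)
next
  case (HS n)
  have "ha 1 w = (0::'a)" "ha (1 - int (n+1)) w = (0::'a)" "ha (1 + int (n+1)) w = (0::'a)"
    using assms HS by (auto simp: ha_def hbas_def)
  moreover have "n + 1 < m" using assms HS by auto
  ultimately show ?thesis using HS assms
    by (simp add: lev_vanish_hs lev_vanish_hz Let_def)
next
  case (HP c n)
  have "3*(n+1) < m" using assms HP by auto
  then show ?thesis using HP assms
    by (simp add: lev_vanish_hp Let_def)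
qed

lemma hmul_inv:
  fixes x :: "hidx \<Rightarrow> 'a::field"
  assumes "x \<in> hcar" "suppIn (B1 m) x" "1 \<le> m"
  shows "suppIn (B1 m) (hmul (ha 1) x)"
  unfolding suppIn_def
proof (intro allI impI)
  fix w assume w: "w \<notin> B1 m"
  have "hmul (ha 1) x w = (\<Sum>v\<in>hsupp x. x v * bmul (HA 1) v w)"
    unfolding ha_def using assms(1) by (rule hmul_ext')
  also have "\<dots> = 0"
  proof (rule sum.neutral, rule ballI)
    fix v assume "v \<in> hsupp x"
    then have "v \<in> B1 m" using assms(2) by (auto simp: suppIn_def hsupp_def)
    then have "bmul (HA 1) v w = (0::'a)" by (rule bmul_inv[OF assms(3) _ w])
    then show "x v * bmul (HA 1) v w = 0" by simp
  qed
  finally show "hmul (ha 1) x w = 0" .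
qed



lemma bit0_nz:
  assumes "(2::'a::field) \<noteq> 0" "(numeral n::'a) \<noteq> 0"
  shows "(numeral (Num.Bit0 n)::'a) \<noteq> 0"
proof -
  have e: "(numeral (Num.Bit0 n)::'a) = 2 * numeral n"
    by (metis mult_2 numeral_Bit0)
  show ?thesis unfolding e using assms by (metis mult_eq_0_iff)
qed

lemma dvd3_simp[simp]: "(3::nat) dvd Suc (Suc (Suc (q * 3)))"
  by (rule dvdI[of _ _ "q+1"]) simp
lemma dvd3_simp'[simp]: "(3::nat) dvd Suc (Suc (Suc (3 * q)))"
  by (rule dvdI[of _ _ "q+1"]) simp

lemma F1_eq:
  fixes q :: nat
  assumes two: "(2::'a::field) \<noteq> 0"
  shows "hmul (ha 1) (\<lambda>w. hbas (HS (3*q+2)) w + hbas (HP True q) w - hbas (HP False q) w)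
    = (\<lambda>w. -(3/4) * hbas (HA 1) w + 3/8 * hbas (HA (1 - int (3*q+3))) w + 3/8 * hbas (HA (1 + int (3*q+3))) w
          + 3/2 * hbas (HS (3*q+2)) w - 3/2 * hbas (HP True q) w - 9/2 * hbas (HP False q) w :: 'a)"
proof
  fix w
  have "hmul (ha 1) (\<lambda>w. hbas (HS (3*q+2)) w + hbas (HP True q) w - hbas (HP False q) w) w
     = (\<Sum>v\<in>{HS (3*q+2), HP True q, HP False q}.
          (hbas (HS (3*q+2)) v + hbas (HP True q) v - hbas (HP False q) v) * bmul (HA 1) v w :: 'a)"
    unfolding ha_def by (rule hmul_ext) (auto simp: hsupp_def hbas_def)
  also have "\<dots> = bmul (HA 1) (HS (3*q+2)) w + bmul (HA 1) (HP True q) w - bmul (HA 1) (HP False q) w"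
    by (simp add: hbas_def)
  also have "\<dots> = -(3/4) * hbas (HA 1) w + 3/8 * hbas (HA (1 - int (3*q+3))) w + 3/8 * hbas (HA (1 + int (3*q+3))) w
          + 3/2 * hbas (HS (3*q+2)) w - 3/2 * hbas (HP True q) w - 9/2 * hbas (HP False q) w"
    using two
    by (cases w) (auto simp: hbas_def ha_def hs_def hz_def hp_def Let_def prep_def field_simps bit0_nz)
  finally show "hmul (ha 1) (\<lambda>w. hbas (HS (3*q+2)) w + hbas (HP True q) w - hbas (HP False q) w) w = 
     -(3/4) * hbas (HA 1) w + 3/8 * hbas (HA (1 - int (3*q+3))) w + 3/8 * hbas (HA (1 + int (3*q+3))) w
          + 3/2 * hbas (HS (3*q+2)) w - 3/2 * hbas (HP True q) w - 9/2 * (hbas (HP False q) w :: 'a)" .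
qed

lemma nat3_simp[simp]: "nat (3 + int q * 3) = 3*q+3" by simp

lemma b11: assumes two: "(2::'a::field) \<noteq> 0"
  shows "bmul (HA 1) (HA 1) = (hbas (HA 1) :: hidx \<Rightarrow> 'a)"
  using two by (intro ext) (simp add: ha_def hs_def hz_def hp_def hzero_def)

lemma b1m:
  assumes two: "(2::'a::field) \<noteq> 0"
  shows "bmul (HA 1) (HA (1 - int (3*q+3))) = (\<lambda>w. 1/2 * hbas (HA 1) w + 1/2 * hbas (HA (1 - int (3*q+3))) w
     + hbas (HS (3*q+2)) w + hbas (HP True q) w + 2 * hbas (HP False q) w :: 'a)"
  by (rule ext, case_tac w) (auto simp: hbas_def ha_def hs_def hz_def hp_def field_simps)

lemma b1p:
  assumes two: "(2::'a::field) \<noteq> 0"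
  shows "bmul (HA 1) (HA (1 + int (3*q+3))) = (\<lambda>w. 1/2 * hbas (HA 1) w + 1/2 * hbas (HA (1 + int (3*q+3))) w
     + hbas (HS (3*q+2)) w + hbas (HP True q) w + 2 * hbas (HP False q) w :: 'a)"
  by (rule ext, case_tac w) (auto simp: hbas_def ha_def hs_def hz_def hp_def field_simps)

lemma b1X:
  shows "bmul (HA 1) (HS (3*q+2)) = (\<lambda>w. -(3/4) * hbas (HA 1) w + 3/8 * hbas (HA (1 - int (3*q+3))) w
     + 3/8 * hbas (HA (1 + int (3*q+3))) w + 3/2 * hbas (HS (3*q+2)) w - hbas (HP True q) w - 2 * hbas (HP False q) w :: 'a::field)"
  by (rule ext, case_tac w) (auto simp: hbas_def ha_def hs_def hz_def hp_def Let_def)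

lemma b1P1:
  assumes two: "(2::'a::field) \<noteq> 0"
  shows "bmul (HA 1) (HP True q) = (\<lambda>w. 1/2 * hbas (HP True q) w :: 'a)"
  apply (rule ext, case_tac w) using two by (auto simp: hbas_def hp_def Let_def prep_def field_simps)

lemma b1P2:
  assumes two: "(2::'a::field) \<noteq> 0"
  shows "bmul (HA 1) (HP False q) = (\<lambda>w. hbas (HP True q) w + 5/2 * hbas (HP False q) w :: 'a)"
  apply (rule ext, case_tac w) using two by (auto simp: hbas_def hp_def Let_def prep_def field_simps)

lemma G_eq:
  fixes q :: nat
  assumes two: "(2::'a::field) \<noteq> 0"
  shows "hmul (ha 1) (\<lambda>w. -(3/4) * hbas (HA 1) w + 3/8 * hbas (HA (1 - int (3*q+3))) w + 3/8 * hbas (HA (1 + int (3*q+3))) w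
          + 3/2 * hbas (HS (3*q+2)) w - 3/2 * hbas (HP True q) w - 9/2 * hbas (HP False q) w)
    = (\<lambda>w. -(3/2) * hbas (HA 1) w + 3/4 * hbas (HA (1 - int (3*q+3))) w + 3/4 * hbas (HA (1 + int (3*q+3))) w
          + 3 * hbas (HS (3*q+2)) w - 6 * hbas (HP True q) w - 51/4 * hbas (HP False q) w :: 'a)"
  (is "hmul (ha 1) ?y = ?r")
proof
  fix w
  let ?V = "{HA 1, HA (1 - int (3*q+3)), HA (1 + int (3*q+3)), HS (3*q+2), HP True q, HP False q}"
  have "hmul (ha 1) ?y w = (\<Sum>v\<in>?V. ?y v * bmul (HA 1) v w)"
    unfolding ha_def by (rule hmul_ext) (auto simp: hsupp_def hbas_def)
  also have "\<dots> = -(3/4) * bmul (HA 1) (HA 1) w + 3/8 * bmul (HA 1) (HA (1 - int (3*q+3))) w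
       + 3/8 * bmul (HA 1) (HA (1 + int (3*q+3))) w + 3/2 * bmul (HA 1) (HS (3*q+2)) w
       - 3/2 * bmul (HA 1) (HP True q) w - 9/2 * bmul (HA 1) (HP False q) w"
    by (simp add: hbas_def)
  also have "\<dots> = ?r w"
    unfolding b11[OF two] b1m[OF two] b1p[OF two] b1X b1P1[OF two] b1P2[OF two]
    using two
    by (cases w) (auto simp: hbas_def field_simps bit0_nz)
  finally show "hmul (ha 1) ?y w = ?r w" .
qed



lemma mod3_a[simp]: "(int q * 3 + 4) mod 3 = 1" "(int q * 3 + 2) mod 3 = 2" by presburger+

lemma E_eq:
  "(\<lambda>w. hs (3*q+3) w + hz (int (3*q+3)) (3*q+3) w)
     = (\<lambda>w. hbas (HS (3*q+2)) w + hbas (HP True q) w - hbas (HP False q) w :: 'a::field)"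
proof (rule ext)
  fix w
  have a: "(int (3*q+3) + 1) mod 3 = 1" "(int (3*q+3) - 1) mod 3 = 2" by presburger+
  show "hs (3*q+3) w + hz (int (3*q+3)) (3*q+3) w
     = hbas (HS (3*q+2)) w + hbas (HP True q) w - (hbas (HP False q) w :: 'a)"
    unfolding hz_def hp_def a by (simp add: hs_def)
qed

context
  fixes I :: "(hidx \<Rightarrow> 'a::field) set" and F :: "(hidx \<Rightarrow> 'a) set"
    and \<alpha> :: "nat \<Rightarrow> 'a" and D m :: nat
  assumes hI: "hideal I" and finF: "finite F"
    and two: "(2::'a) \<noteq> 0" and three: "(3::'a) \<noteq> 0"
    and ha_sp: "\<And>j. ha j \<in> spI I F"
    and u_I: "(\<lambda>w. \<Sum>i\<le>D. \<alpha> i * ha (int i) w) \<in> I"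
    and a0: "\<alpha> 0 \<noteq> 0"
    and Dm: "D < 2*m" and m1: "1 \<le> m"
    and IH: "\<And>l. 1 \<le> l \<Longrightarrow> l < m \<Longrightarrow> hbas (HS (l-1)) \<in> spI I F \<and> (\<forall>c q. 3*(q+1) = l \<longrightarrow> hbas (HP c q) \<in> spI I F)"
begin

lemmas spl = sp_add[OF hI finF] sp_sub[OF hI finF] sp_scale[OF hI finF]

lemma B1sp:
  assumes "x \<in> hcar" "suppIn (B1 m) x"
  shows "x \<in> spI I F"
proof (rule sp_basis[OF hI finF assms(1)])
  fix v assume "x v \<noteq> 0"
  then have v: "v \<in> B1 m" using assms(2) by (auto simp: suppIn_def)
  show "hbas v \<in> spI I F"
  proof (cases v)
    case (HA j) then show ?thesis using ha_sp[of j] by (simp add: ha_def)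
  next
    case (HS n) then show ?thesis using v IH[of "n+1"] by simp
  next
    case (HP c n) then show ?thesis using v IH[of "3*(n+1)"] by simp
  qed
qed

definition uu where "uu = (\<lambda>w. \<Sum>i\<le>D. \<alpha> i * ha (int i) w)"
definition RR where "RR = (\<lambda>w. hmul (ha (int m)) uu w - 1/2 * uu w)"

lemma RR_I: "RR \<in> I"
proof -
  have "hmul (ha (int m)) uu \<in> I" using id_mul[OF hI ha_hcar u_I[folded uu_def]] .
  moreover have "(\<lambda>w. 1/2 * uu w) \<in> I" using id_scale[OF hI u_I[folded uu_def]] .
  ultimately show ?thesis unfolding RR_def using id_sub[OF hI] by blast
qed

lemma hmul_uu: "hmul (ha (int m)) uu = (\<lambda>w. \<Sum>i\<le>D. \<alpha> i * bmul (HA (int m)) (HA (int i)) w)"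
proof -
  have "hmul (ha (int m)) uu = hmul (hbas (HA (int m))) (\<lambda>w. \<Sum>i\<in>{..D}. (\<lambda>w. \<alpha> i * hbas (HA (int i)) w) w)"
    by (simp add: uu_def ha_def)
  also have "\<dots> = (\<lambda>w. \<Sum>i\<in>{..D}. hmul (hbas (HA (int m))) (\<lambda>w. \<alpha> i * hbas (HA (int i)) w) w)"
    by (rule hmul_sum) (auto intro: hcar_scale)
  also have "\<dots> = (\<lambda>w. \<Sum>i\<le>D. \<alpha> i * bmul (HA (int m)) (HA (int i)) w)"
    by (simp add: hmul_scale hmul_bb)
  finally show ?thesis .
qed

definition EE where "EE = (\<lambda>w. hs m w + hz (int m) m w)"

lemma RR_out:
  assumes w: "w \<notin> B1 m"
  shows "RR w = \<alpha> 0 * EE w"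
proof -
  have ham: "ha (int m) w = (0::'a)" using w m1 by (auto simp: ha_def hbas_def)
  have "RR w = (\<Sum>i\<le>D. \<alpha> i * (bmul (HA (int m)) (HA (int i)) w - 1/2 * ha (int i) w))"
    unfolding RR_def hmul_uu unfolding uu_def
    by (simp add: sum_subtractf sum_distrib_left algebra_simps sum.distrib[symmetric])
  also have "\<dots> = (\<Sum>i\<le>D. \<alpha> i * (hs (nat \<bar>int m - int i\<bar>) w + hz (int m) (nat \<bar>int m - int i\<bar>) w))"
    using ham by (intro sum.cong refl) (simp add: algebra_simps)
  also have "\<dots> = \<alpha> 0 * (hs (nat \<bar>int m - int 0\<bar>) w + hz (int m) (nat \<bar>int m - int 0\<bar>) w)"
  proof -
    have "(\<Sum>i\<in>{..D}-{0}. \<alpha> i * (hs (nat \<bar>int m - int i\<bar>) w + hz (int m) (nat \<bar>int m - int i\<bar>) w)) = 0"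
    proof (rule sum.neutral, rule ballI)
      fix i assume i: "i \<in> {..D}-{0}"
      then have "nat \<bar>int m - int i\<bar> < m" using Dm by auto
      then show "\<alpha> i * (hs (nat \<bar>int m - int i\<bar>) w + hz (int m) (nat \<bar>int m - int i\<bar>) w) = 0"
        using w by (simp add: lev_vanish_hs lev_vanish_hz)
    qed
    then show ?thesis by (subst sum.remove[of "{..D}" 0]) auto
  qed
  also have "\<dots> = \<alpha> 0 * EE w" by (simp add: EE_def)
  finally show ?thesis .
qed

definition t0 where "t0 = (\<lambda>w. RR w - \<alpha> 0 * EE w)"

lemma t0_hcar: "t0 \<in> hcar"
  unfolding t0_def EE_def
  using hcar_sub[OF id_hcar[OF hI RR_I] hcar_scale[OF hcar_add[OF hs_hcar hz_hcar]]] by simp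

lemma t0_supp: "suppIn (B1 m) t0"
  unfolding suppIn_def t0_def using RR_out by simp

lemma EE_sp: "EE \<in> spI I F"
proof -
  have "(\<lambda>w. (1 / \<alpha> 0) * (RR w - t0 w)) \<in> spI I F"
    by (intro spl sp_of_I[OF hI finF RR_I] B1sp t0_hcar t0_supp)
  moreover have "(\<lambda>w. (1 / \<alpha> 0) * (RR w - t0 w)) = EE"
    using a0 by (auto simp: t0_def)
  ultimately show ?thesis by simp
qed

lemma t1_facts:
  assumes "x \<in> hcar" "suppIn (B1 m) x"
  shows "hmul (ha 1) x \<in> hcar" "suppIn (B1 m) (hmul (ha 1) x)" "hmul (ha 1) x \<in> spI I F"
proof -
  show s: "suppIn (B1 m) (hmul (ha 1) x)" using hmul_inv[OF assms m1] .
  show h: "hmul (ha 1) x \<in> hcar" using suppIn_hcar[OF B1_finite s] .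
  show "hmul (ha 1) x \<in> spI I F" using B1sp[OF h s] .
qed

lemma EE_hcar: "EE \<in> hcar" unfolding EE_def by (intro hcar_add hs_hcar hz_hcar)

lemma level_m: "hbas (HS (m-1)) \<in> spI I F \<and> (\<forall>c q. 3*(q+1) = m \<longrightarrow> hbas (HP c q) \<in> spI I F)"
proof (cases "3 dvd m")
  case False
  have e: "EE = hbas (HS (m-1))"
    using False m1 by (intro ext) (simp add: EE_def hz_def hp_def hs_def hzero_def)
  have "hbas (HS (m-1)) \<in> spI I F" using EE_sp unfolding e .
  moreover have "\<forall>c q. 3*(q+1) = m \<longrightarrow> hbas (HP c q) \<in> spI I F"
    using False by auto
  ultimately show ?thesis by blast
next
  case True
  then obtain k where k: "m = 3*k" by (auto elim: dvdE)
  define q where "q = k - 1"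
  have mq: "m = 3*q+3" using k m1 by (simp add: q_def)
  define X where "X = (hbas (HS (3*q+2)) :: hidx \<Rightarrow> 'a)"
  define P1 where "P1 = (hbas (HP True q) :: hidx \<Rightarrow> 'a)"
  define P2 where "P2 = (hbas (HP False q) :: hidx \<Rightarrow> 'a)"
  have EE_eq: "EE = (\<lambda>w. X w + P1 w - P2 w)"
    unfolding EE_def X_def P1_def P2_def unfolding mq by (rule E_eq)
  define F1 where "F1 = (\<lambda>w. -(3/4) * hbas (HA 1) w + 3/8 * hbas (HA (1 - int (3*q+3))) w + 3/8 * hbas (HA (1 + int (3*q+3))) w
          + 3/2 * X w - 3/2 * P1 w - 9/2 * (P2 w :: 'a))"
  define G where "G = (\<lambda>w. -(3/2) * hbas (HA 1) w + 3/4 * hbas (HA (1 - int (3*q+3))) w + 3/4 * hbas (HA (1 + int (3*q+3))) w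
          + 3 * X w - 6 * P1 w - 51/4 * (P2 w :: 'a))"
  have F1_hcar: "F1 \<in> hcar" unfolding F1_def
    by (intro hcar_add hcar_sub hcar_scale) (auto simp: X_def P1_def P2_def)
  have hF1: "hmul (ha 1) EE = F1"
    unfolding EE_eq F1_def X_def P1_def P2_def using F1_eq[OF two, of q] .
  have hG: "hmul (ha 1) F1 = G"
    unfolding G_def F1_def X_def P1_def P2_def using G_eq[OF two, of q] .
  define t1 where "t1 = hmul (ha 1) t0"
  have t1: "t1 \<in> hcar" "suppIn (B1 m) t1" "t1 \<in> spI I F"
    unfolding t1_def using t1_facts[OF t0_hcar t0_supp] by auto
  define t2 where "t2 = hmul (ha 1) t1"
  have t2: "t2 \<in> spI I F"
    unfolding t2_def using t1_facts[OF t1(1,2)] by auto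
  have RR_eq: "RR = (\<lambda>w. \<alpha> 0 * EE w + 1 * t0 w)" by (auto simp: t0_def)
  define y1 where "y1 = hmul (ha 1) RR"
  have y1I: "y1 \<in> I" unfolding y1_def by (rule id_mul[OF hI ha_hcar RR_I])
  have y1_eq: "y1 = (\<lambda>w. \<alpha> 0 * F1 w + 1 * t1 w)"
    unfolding y1_def RR_eq ha_def hmul_lin[OF EE_hcar t0_hcar]
    unfolding ha_def[symmetric] hF1 t1_def ..
  define y2 where "y2 = hmul (ha 1) y1"
  have y2I: "y2 \<in> I" unfolding y2_def by (rule id_mul[OF hI ha_hcar y1I])
  have y2_eq: "y2 = (\<lambda>w. \<alpha> 0 * G w + 1 * t2 w)"
    unfolding y2_def y1_eq ha_def hmul_lin[OF F1_hcar t1(1)]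
    unfolding ha_def[symmetric] hG t2_def ..
  have nz: "(4::'a) \<noteq> 0" "(8::'a) \<noteq> 0" using two by (simp_all add: bit0_nz)
  have S12: "(\<lambda>w. P1 w + P2 w) \<in> spI I F"
  proof -
    have "(\<lambda>w. 1/3 * (-(3/4) * ha 1 w + 3/8 * ha (1 - int (3*q+3)) w + 3/8 * ha (1 + int (3*q+3)) w
        + 3/2 * EE w - (1/\<alpha> 0) * (y1 w - t1 w))) \<in> spI I F"
      by (intro spl ha_sp EE_sp sp_of_I[OF hI finF y1I] t1(3))
    moreover have "(\<lambda>w. 1/3 * (-(3/4) * ha 1 w + 3/8 * ha (1 - int (3*q+3)) w + 3/8 * ha (1 + int (3*q+3)) w
        + 3/2 * EE w - (1/\<alpha> 0) * (y1 w - t1 w))) = (\<lambda>w. P1 w + P2 w)"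
      unfolding y1_eq EE_eq F1_def ha_def using a0 two three nz
      by (intro ext) (simp add: field_simps bit0_nz)
    ultimately show ?thesis by simp
  qed
  have P2sp: "P2 \<in> spI I F"
  proof -
    have "(\<lambda>w. 4/3 * (-(3/2) * ha 1 w + 3/4 * ha (1 - int (3*q+3)) w + 3/4 * ha (1 + int (3*q+3)) w
        - 9 * (P1 w + P2 w) - ((1/\<alpha> 0) * (y2 w - t2 w) - 3 * EE w))) \<in> spI I F"
      by (intro spl ha_sp EE_sp sp_of_I[OF hI finF y2I] t2 S12)
    moreover have "(\<lambda>w. 4/3 * (-(3/2) * ha 1 w + 3/4 * ha (1 - int (3*q+3)) w + 3/4 * ha (1 + int (3*q+3)) w
        - 9 * (P1 w + P2 w) - ((1/\<alpha> 0) * (y2 w - t2 w) - 3 * EE w))) = P2"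
      unfolding y2_eq EE_eq G_def ha_def using a0 two three nz
      by (intro ext) (simp add: field_simps bit0_nz)
    ultimately show ?thesis by simp
  qed
  have P1sp: "P1 \<in> spI I F"
  proof -
    have "(\<lambda>w. (P1 w + P2 w) - P2 w) \<in> spI I F" by (intro spl S12 P2sp)
    then show ?thesis by simp
  qed
  have Xsp: "X \<in> spI I F"
  proof -
    have "(\<lambda>w. EE w - P1 w + P2 w) \<in> spI I F" by (intro spl EE_sp P1sp P2sp)
    then show ?thesis unfolding EE_eq by simp
  qed
  show ?thesis
  proof (intro conjI allI impI)
    show "hbas (HS (m-1)) \<in> spI I F" using Xsp by (simp add: X_def mq)
  next
    fix c q' assume "3*(q'+1) = m"
    then have "q' = q" using mq by simp
    then show "hbas (HP c q') \<in> spI I F" using P1sp P2sp by (cases c) (auto simp: P1_def P2_def)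
  qed
qed

end


definition indepI :: "(hidx \<Rightarrow> 'a::field) set \<Rightarrow> (hidx \<Rightarrow> 'a) set \<Rightarrow> bool" where
  "indepI I F \<longleftrightarrow> (\<forall>c. (\<lambda>w. \<Sum>v\<in>F. c v * v w) \<in> I \<longrightarrow> (\<forall>v\<in>F. c v = 0))"

lemma remove_dep:
  fixes I :: "(hidx \<Rightarrow> 'a::field) set"
  assumes hI: "hideal I" and fin: "finite F"
    and cI: "(\<lambda>w. \<Sum>v\<in>F. c v * v w) \<in> I" and v0: "v0 \<in> F" "c v0 \<noteq> 0"
    and x: "x \<in> spI I F"
  shows "x \<in> spI I (F - {v0})"
proof -
  obtain d where d: "(\<lambda>w. x w - (\<Sum>v\<in>F. d v * v w)) \<in> I" using x by (auto simp: spI_def)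
  define k where "k = d v0 / c v0"
  have "(\<lambda>w. 1 * (x w - (\<Sum>v\<in>F. d v * v w)) + k * (\<Sum>v\<in>F. c v * v w)) \<in> I"
    using id_lin[OF hI d cI, of 1 k] by simp
  moreover have "(\<lambda>w. 1 * (x w - (\<Sum>v\<in>F. d v * v w)) + k * (\<Sum>v\<in>F. c v * v w))
     = (\<lambda>w. x w - (\<Sum>v\<in>F - {v0}. (d v - k * c v) * v w))"
  proof
    fix w
    have kk: "k * c v0 = d v0" using v0 by (simp add: k_def)
    have "(\<Sum>v\<in>F. d v * v w) = d v0 * v0 w + (\<Sum>v\<in>F - {v0}. d v * v w)"
      using fin v0 by (simp add: sum.remove)
    moreover have "(\<Sum>v\<in>F. c v * v w) = c v0 * v0 w + (\<Sum>v\<in>F - {v0}. c v * v w)"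
      using fin v0 by (simp add: sum.remove)
    ultimately show "1 * (x w - (\<Sum>v\<in>F. d v * v w)) + k * (\<Sum>v\<in>F. c v * v w)
       = x w - (\<Sum>v\<in>F - {v0}. (d v - k * c v) * v w)"
      using kk by (simp add: algebra_simps sum_subtractf sum_distrib_left)
  qed
  ultimately show ?thesis unfolding spI_def by auto
qed

lemma extract_basis:
  fixes I :: "(hidx \<Rightarrow> 'a::field) set"
  assumes hI: "hideal I"
  shows "finite F \<Longrightarrow> (\<forall>x\<in>hcar. x \<in> spI I F) \<Longrightarrow> \<exists>F'\<subseteq>F. indepI I F' \<and> (\<forall>x\<in>hcar. x \<in> spI I F')"
proof (induction "card F" arbitrary: F rule: less_induct)
  case less
  show ?case
  proof (cases "indepI I F")
    case True then show ?thesis using less.prems by blast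
  next
    case False
    then obtain c v0 where cI: "(\<lambda>w. \<Sum>v\<in>F. c v * v w) \<in> I" and v0: "v0 \<in> F" "c v0 \<noteq> 0"
      unfolding indepI_def by blast
    have sp0: "\<forall>x\<in>hcar. x \<in> spI I (F - {v0})"
      using remove_dep[OF hI less.prems(1) cI v0] less.prems(2) by blast
    have "card (F - {v0}) < card F" by (rule card_Diff1_less[OF less.prems(1) v0(1)])
    then obtain F' where "F' \<subseteq> F - {v0}" "indepI I F'" "\<forall>x\<in>hcar. x \<in> spI I F'"
      using less.hyps[of "F - {v0}"] less.prems(1) sp0 by auto
    then show ?thesis by blast
  qed
qed

lemma qdim_from_set:
  fixes I :: "(hidx \<Rightarrow> 'a::field) set"
  assumes "finite F'" "F' \<subseteq> hcar" "indepI I F'" "\<forall>x\<in>hcar. x \<in> spI I F'"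
  shows "qdim I hcar (card F')"
proof -
  obtain xs where xs: "set xs = F'" "distinct xs" using finite_distinct_list[OF assms(1)] by blast
  have len: "length xs = card F'" using xs distinct_card by fastforce
  have bij: "bij_betw ((!) xs) {..<length xs} F'" using bij_betw_nth[OF xs(2) refl xs(1)[symmetric]] .
  have reidx: "\<And>g. (\<Sum>i<length xs. g (xs ! i)) = (\<Sum>v\<in>F'. g v)"
    using sum.reindex_bij_betw[OF bij] .
  show ?thesis unfolding qdim_def
  proof (intro exI[of _ xs] conjI allI impI ballI)
    show "length xs = card F'" by (rule len)
  next
    show "set xs \<subseteq> hspan hcar"
    proof
      fix v assume "v \<in> set xs"
      then have "v \<in> hcar" using xs assms(2) by auto
      then show "v \<in> hspan hcar"
        by (auto simp: hspan_def intro!: exI[of _ "{v}"] exI[of _ "\<lambda>_. 1"])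
    qed
  next
    fix c i assume cI: "lcomb c xs \<in> I" and i: "i < card F'"
    define c' where "c' = (\<lambda>v. c (inv_into {..<length xs} ((!) xs) v))"
    have ci: "\<And>j. j < length xs \<Longrightarrow> c' (xs ! j) = c j"
      unfolding c'_def using bij by (simp add: bij_betw_def inv_into_f_f)
    have "lcomb c xs = (\<lambda>w. \<Sum>v\<in>F'. c' v * v w)"
    proof
      fix w
      have "lcomb c xs w = (\<Sum>j<length xs. c' (xs ! j) * (xs ! j) w)"
        unfolding lcomb_def using ci by simp
      also have "\<dots> = (\<Sum>v\<in>F'. c' v * v w)" by (rule reidx)
      finally show "lcomb c xs w = (\<Sum>v\<in>F'. c' v * v w)" .
    qed
    then have "\<forall>v\<in>F'. c' v = 0" using cI assms(3) unfolding indepI_def by auto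
    moreover have "xs ! i \<in> F'" using i len xs(1) by auto
    ultimately show "c i = 0" using ci[of i] i len by simp
  next
    fix x :: "hidx \<Rightarrow> 'a" assume "x \<in> hcar"
    then obtain d where d: "(\<lambda>w. x w - (\<Sum>v\<in>F'. d v * v w)) \<in> I"
      using assms(4) by (auto simp: spI_def)
    have "lcomb (\<lambda>j. d (xs ! j)) xs = (\<lambda>w. \<Sum>v\<in>F'. d v * v w)"
    proof
      fix w show "lcomb (\<lambda>j. d (xs ! j)) xs w = (\<Sum>v\<in>F'. d v * v w)"
        unfolding lcomb_def using reidx[of "\<lambda>v. d v * v w"] by simp
    qed
    then show "\<exists>c. (\<lambda>w. x w - lcomb c xs w) \<in> I" using d by (intro exI[of _ "\<lambda>j. d (xs ! j)"]) simp
  qed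
qed

theorem corollary9p7:
  fixes I :: "(hidx \<Rightarrow> 'a::field) set" and D :: nat
  assumes "(2::'a) \<noteq> 0" and "(3::'a) \<noteq> 0"
    and "1 \<le> D"
    and "minimal_ideal I D"
  shows "\<exists>n \<le> D + D div 2 + 2 * (D div 6). qdim I hcar n"
proof -
  note two = assms(1) and three = assms(2)
  have hI: "hideal I" and ax: "axial_codim I D" and pat: "\<exists>\<alpha>. has_pattern I D \<alpha>"
    using assms(4) unfolding minimal_ideal_def by blast+
  obtain \<alpha> where \<alpha>: "has_pattern I D \<alpha>" using pat by blast
  have a0: "\<alpha> 0 \<noteq> 0" and u_I: "(\<lambda>w. \<Sum>i\<le>D. \<alpha> i * ha (int i) w) \<in> I"
    using \<alpha> unfolding has_pattern_def by blast+
  obtain vs where vs: "length vs = D" "set vs \<subseteq> hspan (range ha)"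
      "\<forall>x\<in>range ha. \<exists>c. (\<lambda>w. x w - lcomb c vs w) \<in> I"
    using ax unfolding axial_codim_def qdim_def by blast
  define SS where "SS = (\<lambda>n. hbas (HS n) :: hidx \<Rightarrow> 'a) ` {..<D div 2}"
  define PT where "PT = (\<lambda>q. hbas (HP True q) :: hidx \<Rightarrow> 'a) ` {..<D div 6}"
  define PF where "PF = (\<lambda>q. hbas (HP False q) :: hidx \<Rightarrow> 'a) ` {..<D div 6}"
  define F where "F = set vs \<union> SS \<union> PT \<union> PF"
  have finF: "finite F" by (simp add: F_def SS_def PT_def PF_def)
  have cardF: "card F \<le> D + D div 2 + 2 * (D div 6)"
  proof -
    have "card F \<le> card (set vs) + card SS + card PT + card PF"
      unfolding F_def by (meson card_Un_le le_trans add_le_mono order_refl)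
    moreover have "card (set vs) \<le> D" using vs(1) card_length by metis
    moreover have "card SS \<le> D div 2" unfolding SS_def using card_image_le[of "{..<D div 2}"] by simp
    moreover have "card PT \<le> D div 6" unfolding PT_def using card_image_le[of "{..<D div 6}"] by simp
    moreover have "card PF \<le> D div 6" unfolding PF_def using card_image_le[of "{..<D div 6}"] by simp
    ultimately show ?thesis by linarith
  qed
  have Fhcar: "F \<subseteq> hcar"
  proof
    fix v assume v: "v \<in> F"
    show "v \<in> hcar"
    proof (cases "v \<in> set vs")
      case True
      then obtain T c where "v = (\<lambda>w. \<Sum>u\<in>T. c u * u w)" "finite T" "T \<subseteq> range ha"
        using vs(2) unfolding hspan_def by blast
      then show ?thesis by (auto intro!: hcar_sum hcar_scale)
    next
      case False then show ?thesis using v by (auto simp: F_def SS_def PT_def PF_def)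
    qed
  qed
  have ha_sp: "\<And>j. ha j \<in> spI I F"
  proof -
    fix j
    obtain c where c: "(\<lambda>w. ha j w - lcomb c vs w) \<in> I" using vs(3) by blast
    have "lcomb c vs \<in> spI I F"
      unfolding lcomb_def
      by (intro sp_sum[OF hI finF] ballI sp_scale[OF hI finF] sp_elem[OF hI finF])
         (auto simp: F_def)
    then have "(\<lambda>w. (ha j w - lcomb c vs w) + lcomb c vs w) \<in> spI I F"
      by (intro sp_add[OF hI finF] sp_of_I[OF hI finF c])
    then show "ha j \<in> spI I F" by simp
  qed
  have levels: "\<And>l. 1 \<le> l \<Longrightarrow> hbas (HS (l-1)) \<in> spI I F \<and> (\<forall>c q. 3*(q+1) = l \<longrightarrow> hbas (HP c q) \<in> spI I F)"
  proof -
    fix l :: nat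
    show "1 \<le> l \<Longrightarrow> hbas (HS (l-1)) \<in> spI I F \<and> (\<forall>c q. 3*(q+1) = l \<longrightarrow> hbas (HP c q) \<in> spI I F)"
    proof (induction l rule: less_induct)
      case (less l)
      show ?case
      proof (cases "l \<le> D div 2")
        case True
        have "hbas (HS (l-1)) \<in> F" using True less.prems by (auto simp: F_def SS_def)
        moreover have "\<forall>c q. 3*(q+1) = l \<longrightarrow> hbas (HP c q) \<in> F"
        proof (intro allI impI)
          fix c q assume "3*(q+1) = l"
          then have "q < D div 6" using True by presburger
          then show "hbas (HP c q) \<in> F" by (cases c) (auto simp: F_def PT_def PF_def)
        qed
        ultimately show ?thesis using sp_elem[OF hI finF] by blast
      next
        case False
        then have Dm: "D < 2*l" by linarith
        show ?thesis
          by (rule level_m[OF hI finF two three ha_sp u_I a0 Dm less.prems less.IH]) auto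
      qed
    qed
  qed
  have all: "\<forall>x\<in>hcar. x \<in> spI I F"
  proof
    fix x :: "hidx \<Rightarrow> 'a" assume x: "x \<in> hcar"
    show "x \<in> spI I F"
    proof (rule sp_basis[OF hI finF x])
      fix v show "hbas v \<in> spI I F"
      proof (cases v)
        case (HA j) then show ?thesis using ha_sp[of j] by (simp add: ha_def)
      next
        case (HS n) then show ?thesis using levels[of "n+1"] by simp
      next
        case (HP c n) then show ?thesis using levels[of "3*(n+1)"] by simp
      qed
    qed
  qed
  obtain F' where F': "F' \<subseteq> F" "indepI I F'" "\<forall>x\<in>hcar. x \<in> spI I F'"
    using extract_basis[OF hI finF all] by blast
  have "finite F'" using F'(1) finF by (rule finite_subset)
  then have "qdim I hcar (card F')" using qdim_from_set F' Fhcar by blast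
  moreover have "card F' \<le> D + D div 2 + 2 * (D div 6)"
    using card_mono[OF finF F'(1)] cardF by linarith
  ultimately show ?thesis by blast
qed

end
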